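(* Let $X$ be a compactum, let $n\geq2$, and let $f:X\to X$ be a function. Consider the statements: (1) $f$ is multi-transitive; (2) $F_n(f)$ is multi-transitive; (3) $SF_n(f)$ is multi-transitive. Then (2) and (3) are equivalent, and (2) implies (1).
   Context: A compactum is a nondegenerate compact, perfect, Hausdorff topological space. $F_n(X)$ is the set of nonempty subsets of $X$ with at most $n$ points, with the Vietoris topology; $F_1(X)=\{\{x\}:x\in X\}$; $F_n(f)(A)=f(A)$. $SF_n(X)=F_n(X)/F_1(X)$ is the quotient collapsing $F_1(X)$ to a point, $q$ the quotient map, $F_X=q(F_1(X))$, and $SF_n(f)(\chi)=q(F_n(f)(q^{-1}(\chi)))$ for $\chi\neq F_X$, $SF_n(f)(F_X)=F_X$. A function $g:Z\to Z$ is transitive if for all nonempty open $U,V\subseteq Z$ there is $k\in\mathbb{N}$ with $g^k(U)\cap V\neq\emptyset$; $g$ is multi-transitive if for every $m\in\mathbb{N}$ the product $g\times g^2\times\cdots\times g^m:Z^m\to Z^m$ is transitive. *)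

theory Defs
  imports "HOL-Analysis.Analysis"
begin

definition compactum :: "'a topology \<Rightarrow> bool" where
  "compactum X \<longleftrightarrow> compact_space X \<and> Hausdorff_space X \<and>
     X derived_set_of topspace X = topspace X \<and>
     (\<exists>x\<in>topspace X. \<exists>y\<in>topspace X. x \<noteq> y)"

definition Fn_set :: "nat \<Rightarrow> 'a topology \<Rightarrow> 'a set set" where
  "Fn_set n X = {A. A \<subseteq> topspace X \<and> A \<noteq> {} \<and> finite A \<and> card A \<le> n}"

text \<open>Vietoris topology on F_n(X) (as subspace of the hyperspace): generated by
  the subbasic sets <U> = {A. A \<subseteq> U} and [U] = {A. A \<inter> U \<noteq> {}}, U open in X.\<close>
definition Fn :: "nat \<Rightarrow> 'a topology \<Rightarrow> 'a set topology" where
  "Fn n X = topology_generated_by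
     ((\<lambda>U. {A \<in> Fn_set n X. A \<subseteq> U}) ` {U. openin X U} \<union>
      (\<lambda>U. {A \<in> Fn_set n X. A \<inter> U \<noteq> {}}) ` {U. openin X U})"

definition Fn_map :: "('a \<Rightarrow> 'a) \<Rightarrow> 'a set \<Rightarrow> 'a set" where
  "Fn_map f A = f ` A"

definition F1_set :: "'a topology \<Rightarrow> 'a set set" where
  "F1_set X = {{x} | x. x \<in> topspace X}"

definition quotient_topology :: "'b topology \<Rightarrow> ('b \<Rightarrow> 'c) \<Rightarrow> 'c topology" where
  "quotient_topology Z q = topology (\<lambda>U. U \<subseteq> q ` topspace Z \<and>
       openin Z {z \<in> topspace Z. q z \<in> U})"

lemma istopology_quotient:
  "istopology (\<lambda>U. U \<subseteq> q ` topspace Z \<and> openin Z {z \<in> topspace Z. q z \<in> U})"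
  unfolding istopology_def
proof (rule conjI; intro allI impI)
  fix S T assume hS: "S \<subseteq> q ` topspace Z \<and> openin Z {z \<in> topspace Z. q z \<in> S}"
    and hT: "T \<subseteq> q ` topspace Z \<and> openin Z {z \<in> topspace Z. q z \<in> T}"
  have e: "{z \<in> topspace Z. q z \<in> S \<inter> T} = {z \<in> topspace Z. q z \<in> S} \<inter> {z \<in> topspace Z. q z \<in> T}"
    by auto
  show "S \<inter> T \<subseteq> q ` topspace Z \<and> openin Z {z \<in> topspace Z. q z \<in> S \<inter> T}"
    unfolding e using hS hT by auto
next
  fix K assume K: "\<forall>S\<in>K. S \<subseteq> q ` topspace Z \<and> openin Z {z \<in> topspace Z. q z \<in> S}"
  have e: "{z \<in> topspace Z. q z \<in> \<Union>K} = (\<Union>S\<in>K. {z \<in> topspace Z. q z \<in> S})" by auto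
  show "\<Union>K \<subseteq> q ` topspace Z \<and> openin Z {z \<in> topspace Z. q z \<in> \<Union>K}"
    unfolding e using K by auto
qed

lemma openin_quotient_topology:
  "openin (quotient_topology Z q) U \<longleftrightarrow>
     U \<subseteq> q ` topspace Z \<and> openin Z {z \<in> topspace Z. q z \<in> U}"
  unfolding quotient_topology_def using istopology_quotient by (simp add: topology_inverse'[OF istopology_quotient])

text \<open>The quotient map q: each point of F_n(X) is sent to its equivalence class,
  where the only nontrivial class is F_1(X) itself.\<close>
definition SF_q :: "nat \<Rightarrow> 'a topology \<Rightarrow> 'a set \<Rightarrow> 'a set set" where
  "SF_q n X A = (if A \<in> F1_set X then F1_set X else {A})"

definition SFn :: "nat \<Rightarrow> 'a topology \<Rightarrow> 'a set set topology" where
  "SFn n X = quotient_topology (Fn n X) (SF_q n X)"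

definition SF_base :: "nat \<Rightarrow> 'a topology \<Rightarrow> 'a set set" where
  "SF_base n X = F1_set X"

text \<open>SF_n(f)(chi) = q(F_n(f)(q^{-1}(chi))) for chi \<noteq> F_X (q^{-1}(chi) is a single
  point then), and SF_n(f)(F_X) = F_X.\<close>
definition SFn_map :: "nat \<Rightarrow> 'a topology \<Rightarrow> ('a \<Rightarrow> 'a) \<Rightarrow> 'a set set \<Rightarrow> 'a set set" where
  "SFn_map n X f c = (if c = SF_base n X then SF_base n X
     else SF_q n X (Fn_map f (THE A. A \<in> topspace (Fn n X) \<and> SF_q n X A = c)))"

definition transitive_on :: "'b topology \<Rightarrow> ('b \<Rightarrow> 'b) \<Rightarrow> bool" where
  "transitive_on Z g \<longleftrightarrow>
     (\<forall>U V. openin Z U \<and> U \<noteq> {} \<and> openin Z V \<and> V \<noteq> {} \<longrightarrow>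
        (\<exists>k::nat. k \<ge> 1 \<and> (g ^^ k) ` U \<inter> V \<noteq> {}))"

text \<open>The product g \<times> g^2 \<times> ... \<times> g^m on Z^m, with Z^m the product topology
  indexed by {0..<m} (coordinate i carries g^(i+1)).\<close>
definition prod_iter_map :: "nat \<Rightarrow> ('b \<Rightarrow> 'b) \<Rightarrow> (nat \<Rightarrow> 'b) \<Rightarrow> (nat \<Rightarrow> 'b)" where
  "prod_iter_map m g x = (\<lambda>i\<in>{..<m}. (g ^^ Suc i) (x i))"

definition multi_transitive_on :: "'b topology \<Rightarrow> ('b \<Rightarrow> 'b) \<Rightarrow> bool" where
  "multi_transitive_on Z g \<longleftrightarrow>
     (\<forall>m::nat. m \<ge> 1 \<longrightarrow>
        transitive_on (product_topology (\<lambda>_. Z) {..<m}) (prod_iter_map m g))"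

end

theory Submission
  imports Defs
begin

definition boxtrans :: "'b topology \<Rightarrow> ('b \<Rightarrow> 'b) \<Rightarrow> nat \<Rightarrow> bool" where
  "boxtrans Z g m \<longleftrightarrow> (\<forall>U V. (\<forall>i<m. openin Z (U i) \<and> U i \<noteq> {} \<and> openin Z (V i) \<and> V i \<noteq> {})
     \<longrightarrow> (\<exists>k\<ge>1. \<forall>i<m. \<exists>x\<in>U i. (g ^^ (Suc i * k)) x \<in> V i))"

lemma prod_iter_pow:
  assumes "k \<ge> 1"
  shows "(prod_iter_map m g ^^ k) x = (\<lambda>i\<in>{..<m}. (g ^^ (Suc i * k)) (x i))"
  using assms
proof (induct k)
  case 0 then show ?case by simp
next
  case (Suc k)
  show ?case
  proof (cases "k = 0")
    case True then show ?thesis by (simp add: prod_iter_map_def)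
  next
    case False
    then have "k \<ge> 1" by simp
    then have IH: "(prod_iter_map m g ^^ k) x = (\<lambda>i\<in>{..<m}. (g ^^ (Suc i * k)) (x i))"
      by (rule Suc.hyps)
    have "(prod_iter_map m g ^^ Suc k) x = prod_iter_map m g ((prod_iter_map m g ^^ k) x)"
      by simp
    also have "\<dots> = prod_iter_map m g (\<lambda>i\<in>{..<m}. (g ^^ (Suc i * k)) (x i))"
      by (simp only: IH)
    also have "\<dots> = (\<lambda>i\<in>{..<m}. (g ^^ (Suc i * Suc k)) (x i))"
      unfolding prod_iter_map_def
      by (rule restrict_ext) (simp add: funpow_add)
    finally show ?thesis .
  qed
qed

lemma trans_box:
  "transitive_on (product_topology (\<lambda>_. Z) {..<m}) (prod_iter_map m g) \<longleftrightarrow> boxtrans Z g m"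
proof
  assume T: "transitive_on (product_topology (\<lambda>_. Z) {..<m}) (prod_iter_map m g)"
  show "boxtrans Z g m"
    unfolding boxtrans_def
  proof (intro allI impI)
    fix U V :: "nat \<Rightarrow> 'a set"
    assume H: "\<forall>i<m. openin Z (U i) \<and> U i \<noteq> {} \<and> openin Z (V i) \<and> V i \<noteq> {}"
    have oU: "openin (product_topology (\<lambda>_. Z) {..<m}) (PiE {..<m} U)"
      using H by (simp add: openin_PiE_gen)
    have oV: "openin (product_topology (\<lambda>_. Z) {..<m}) (PiE {..<m} V)"
      using H by (simp add: openin_PiE_gen)
    have nU: "PiE {..<m} U \<noteq> {}" using H by (simp add: PiE_eq_empty_iff)
    have nV: "PiE {..<m} V \<noteq> {}" using H by (simp add: PiE_eq_empty_iff)
    obtain k where k: "k \<ge> 1" "(prod_iter_map m g ^^ k) ` PiE {..<m} U \<inter> PiE {..<m} V \<noteq> {}"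
      using T[unfolded transitive_on_def, rule_format, OF conjI[OF oU conjI[OF nU conjI[OF oV nV]]]] by blast
    then obtain y where y: "y \<in> PiE {..<m} U" "(prod_iter_map m g ^^ k) y \<in> PiE {..<m} V" by (auto simp only: image_iff disjoint_iff)
    have "\<forall>i<m. \<exists>x\<in>U i. (g ^^ (Suc i * k)) x \<in> V i"
    proof (intro allI impI)
      fix i assume i: "i < m"
      have "((prod_iter_map m g ^^ k) y) i \<in> V i" using y(2) i by (auto simp: PiE_iff)
      then have "(g ^^ (Suc i * k)) (y i) \<in> V i" using i by (simp add: prod_iter_pow[OF k(1)])
      moreover have "y i \<in> U i" using y(1) i by (auto simp: PiE_iff)
      ultimately show "\<exists>x\<in>U i. (g ^^ (Suc i * k)) x \<in> V i" by blast
    qed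
    then show "\<exists>k\<ge>1. \<forall>i<m. \<exists>x\<in>U i. (g ^^ (Suc i * k)) x \<in> V i" using k(1) by blast
  qed
next
  assume B: "boxtrans Z g m"
  show "transitive_on (product_topology (\<lambda>_. Z) {..<m}) (prod_iter_map m g)"
    unfolding transitive_on_def
  proof (intro allI impI)
    fix U V assume H: "openin (product_topology (\<lambda>_. Z) {..<m}) U \<and> U \<noteq> {} \<and>
       openin (product_topology (\<lambda>_. Z) {..<m}) V \<and> V \<noteq> {}"
    obtain x where x: "x \<in> U" using H by blast
    obtain y where y: "y \<in> V" using H by blast
    obtain XU where XU: "x \<in> PiE {..<m} XU" "\<forall>i. openin Z (XU i)" "PiE {..<m} XU \<subseteq> U"
      using product_topology_open_contains_basis[of "\<lambda>_. Z" "{..<m}" U x] H x by blast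
    obtain XV where XV: "y \<in> PiE {..<m} XV" "\<forall>i. openin Z (XV i)" "PiE {..<m} XV \<subseteq> V"
      using product_topology_open_contains_basis[of "\<lambda>_. Z" "{..<m}" V y] H y by blast
    have "\<forall>i<m. openin Z (XU i) \<and> XU i \<noteq> {} \<and> openin Z (XV i) \<and> XV i \<noteq> {}"
      using XU XV by (auto simp: PiE_iff)
    then obtain k where k: "k \<ge> 1" "\<forall>i<m. \<exists>x\<in>XU i. (g ^^ (Suc i * k)) x \<in> XV i"
      using B unfolding boxtrans_def by blast
    then obtain a where a: "\<forall>i<m. a i \<in> XU i \<and> (g ^^ (Suc i * k)) (a i) \<in> XV i"
      by metis
    define z where "z = restrict a {..<m}"
    have "z \<in> PiE {..<m} XU" using a unfolding z_def by (simp add: restrict_PiE_iff)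
    then have "z \<in> U" using XU(3) by (rule subsetD[rotated])
    moreover have "(prod_iter_map m g ^^ k) z \<in> PiE {..<m} XV"
      using a unfolding z_def prod_iter_pow[OF k(1)] by (simp add: restrict_PiE_iff)
    then have "(prod_iter_map m g ^^ k) z \<in> V" using XV(3) by (rule subsetD[rotated])
    ultimately show "\<exists>k\<ge>1. (prod_iter_map m g ^^ k) ` U \<inter> V \<noteq> {}" using k(1) by blast
  qed
qed

lemma multi_box: "multi_transitive_on Z g \<longleftrightarrow> (\<forall>m\<ge>1. boxtrans Z g m)"
  unfolding multi_transitive_on_def trans_box by simp

lemma topspace_Fn: "topspace (Fn n X) = Fn_set n X"
proof -
  have e: "{A \<in> Fn_set n X. A \<subseteq> topspace X} = Fn_set n X" unfolding Fn_set_def by blast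
  have "Fn_set n X \<in> (\<lambda>U. {A \<in> Fn_set n X. A \<subseteq> U}) ` {U. openin X U}"
    by (rule image_eqI[where x="topspace X"]) (simp_all only: e mem_Collect_eq openin_topspace)
  then show ?thesis unfolding Fn_def topology_generated_by_topspace
    by blast
qed

lemma open_sub: "openin X U \<Longrightarrow> openin (Fn n X) {A \<in> Fn_set n X. A \<subseteq> U}"
  unfolding Fn_def by (rule topology_generated_by_Basis) blast

lemma open_hit: "openin X U \<Longrightarrow> openin (Fn n X) {A \<in> Fn_set n X. A \<inter> U \<noteq> {}}"
  unfolding Fn_def by (rule topology_generated_by_Basis) blast

lemma nbhd_single:
  assumes "openin (Fn n X) W"
  shows "\<forall>x. {x} \<in> W \<longrightarrow> (\<exists>N. openin X N \<and> x \<in> N \<and> (\<forall>B\<in>Fn_set n X. x \<in> B \<and> B \<subseteq> N \<longrightarrow> B \<in> W))"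
proof -
  have "generate_topology_on ((\<lambda>U. {A \<in> Fn_set n X. A \<subseteq> U}) ` {U. openin X U} \<union>
      (\<lambda>U. {A \<in> Fn_set n X. A \<inter> U \<noteq> {}}) ` {U. openin X U}) W"
    using assms unfolding Fn_def by (rule openin_topology_generated_by)
  then show ?thesis
  proof induct
    case Empty then show ?case by simp
  next
    case (Int a b)
    show ?case
    proof (intro allI impI)
      fix x assume xab: "{x} \<in> a \<inter> b"
      then have xa: "{x} \<in> a" and xb: "{x} \<in> b" by simp_all
      obtain N1 where N1: "openin X N1" "x \<in> N1" "\<forall>B\<in>Fn_set n X. x \<in> B \<and> B \<subseteq> N1 \<longrightarrow> B \<in> a"
        using Int(2)[rule_format, OF xa] by (elim exE conjE)
      obtain N2 where N2: "openin X N2" "x \<in> N2" "\<forall>B\<in>Fn_set n X. x \<in> B \<and> B \<subseteq> N2 \<longrightarrow> B \<in> b"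
        using Int(4)[rule_format, OF xb] by (elim exE conjE)
      have "openin X (N1 \<inter> N2)" using N1(1) N2(1) by (rule openin_Int)
      moreover have "x \<in> N1 \<inter> N2" using N1(2) N2(2) by simp
      moreover have "\<forall>B\<in>Fn_set n X. x \<in> B \<and> B \<subseteq> N1 \<inter> N2 \<longrightarrow> B \<in> a \<inter> b"
        using N1(3) N2(3) by blast
      ultimately show "\<exists>N. openin X N \<and> x \<in> N \<and> (\<forall>B\<in>Fn_set n X. x \<in> B \<and> B \<subseteq> N \<longrightarrow> B \<in> a \<inter> b)"
        by blast
    qed
  next
    case (UN K)
    show ?case
    proof (intro allI impI)
      fix x assume "{x} \<in> \<Union>K"
      then obtain k where "k \<in> K" "{x} \<in> k" by blast
      have "\<forall>x. {x} \<in> k \<longrightarrow> (\<exists>N. openin X N \<and> x \<in> N \<and> (\<forall>B\<in>Fn_set n X. x \<in> B \<and> B \<subseteq> N \<longrightarrow> B \<in> k))"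
        using UN \<open>k \<in> K\<close> by simp
      then obtain N where "openin X N" "x \<in> N" "\<forall>B\<in>Fn_set n X. x \<in> B \<and> B \<subseteq> N \<longrightarrow> B \<in> k"
        using \<open>{x} \<in> k\<close> by blast
      then show "\<exists>N. openin X N \<and> x \<in> N \<and> (\<forall>B\<in>Fn_set n X. x \<in> B \<and> B \<subseteq> N \<longrightarrow> B \<in> \<Union>K)"
        using \<open>k \<in> K\<close> by blast
    qed
  next
    case (Basis s)
    then obtain U where U: "openin X U" and
      s: "s = {A \<in> Fn_set n X. A \<subseteq> U} \<or> s = {A \<in> Fn_set n X. A \<inter> U \<noteq> {}}"
      by blast
    show ?case
    proof (intro allI impI)
      fix x assume x: "{x} \<in> s"
      then have "x \<in> U" using s by blast
      moreover have "\<forall>B\<in>Fn_set n X. x \<in> B \<and> B \<subseteq> U \<longrightarrow> B \<in> s" using s \<open>x \<in> U\<close> by blast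
      ultimately show "\<exists>N. openin X N \<and> x \<in> N \<and> (\<forall>B\<in>Fn_set n X. x \<in> B \<and> B \<subseteq> N \<longrightarrow> B \<in> s)"
        using U by blast
    qed
  qed
qed

lemma dense_nonF1:
  assumes "compactum X" "n \<ge> 2" "openin (Fn n X) W" "W \<noteq> {}"
  shows "\<exists>B\<in>W. B \<notin> F1_set X"
proof -
  obtain A where A: "A \<in> W" using assms by blast
  show ?thesis
  proof (cases "A \<in> F1_set X")
    case False then show ?thesis using A by blast
  next
    case True
    then obtain x where x: "A = {x}" "x \<in> topspace X" by (auto simp: F1_set_def)
    obtain N where N: "openin X N" "x \<in> N" "\<forall>B\<in>Fn_set n X. x \<in> B \<and> B \<subseteq> N \<longrightarrow> B \<in> W"
      using nbhd_single[OF assms(3)] A x by blast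
    have "x \<in> X derived_set_of topspace X" using assms(1) x unfolding compactum_def by blast
    then obtain y where y: "y \<noteq> x" "y \<in> topspace X" "y \<in> N"
      using N unfolding in_derived_set_of by blast
    have "{x, y} \<in> Fn_set n X" using x y assms(2) by (auto simp: Fn_set_def)
    then have "{x, y} \<in> W" using N y by blast
    moreover have "{x, y} \<notin> F1_set X"
    proof
      assume "{x, y} \<in> F1_set X"
      then obtain z where z: "{x, y} = {z}" unfolding F1_set_def by blast
      have "x \<in> {z}" "y \<in> {z}" by (simp_all only: z[symmetric] insertI1 insertI2)
      then have "x = z" "y = z" by simp_all
      then show False using y(1) by simp
    qed
    ultimately show ?thesis by blast
  qed
qed

lemma F1_closed:
  assumes "Hausdorff_space X"
  shows "openin (Fn n X) (Fn_set n X - F1_set X)"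
proof (subst openin_subopen, intro ballI)
  fix A assume A: "A \<in> Fn_set n X - F1_set X"
  then obtain a where a: "a \<in> A" unfolding Fn_set_def by blast
  have "A \<subseteq> topspace X" using A unfolding Fn_set_def by blast
  then have "a \<in> topspace X" using a by blast
  then have "{a} \<in> F1_set X" unfolding F1_set_def by blast
  then have "A \<noteq> {a}" using A by blast
  then obtain b where b: "b \<in> A" "b \<noteq> a" using a by blast
  have "a \<in> topspace X" "b \<in> topspace X" using \<open>A \<subseteq> topspace X\<close> a b by blast+
  then obtain Ua Ub where U: "openin X Ua" "openin X Ub" "a \<in> Ua" "b \<in> Ub" "disjnt Ua Ub"
    using assms[unfolded Hausdorff_space_def, rule_format, of a b] b(2) by auto
  define T where "T = {B \<in> Fn_set n X. B \<inter> Ua \<noteq> {}} \<inter> {B \<in> Fn_set n X. B \<inter> Ub \<noteq> {}}"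
  have "openin (Fn n X) T" unfolding T_def using U by (intro openin_Int open_hit)
  moreover have "A \<in> T" unfolding T_def using A a b U by auto
  moreover have "T \<subseteq> Fn_set n X - F1_set X"
  proof
    fix B assume B: "B \<in> T"
    show "B \<in> Fn_set n X - F1_set X"
    proof
      show "B \<in> Fn_set n X" using B unfolding T_def by blast
      show "B \<notin> F1_set X"
      proof
        assume "B \<in> F1_set X"
        then obtain z where z: "B = {z}" unfolding F1_set_def by blast
        then have "z \<in> Ua" "z \<in> Ub" using B unfolding T_def by blast+
        then show False using U(5) unfolding disjnt_def by blast
      qed
    qed
  qed
  ultimately show "\<exists>T. openin (Fn n X) T \<and> A \<in> T \<and> T \<subseteq> Fn_set n X - F1_set X" by blast
qed

lemma F1_ne_single:
  assumes "x \<in> topspace X" "B \<notin> F1_set X"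
  shows "F1_set X \<noteq> {B}"
proof
  assume "F1_set X = {B}"
  moreover have "{x} \<in> F1_set X" using assms by (auto simp: F1_set_def)
  ultimately show False using assms(2) by auto
qed

lemma SF_q_inj:
  assumes "x \<in> topspace X" "B \<notin> F1_set X" "SF_q n X C = SF_q n X B"
  shows "C = B"
proof (cases "C \<in> F1_set X")
  case True
  then have "F1_set X = {B}" using assms(2,3) unfolding SF_q_def by simp
  then show ?thesis using F1_ne_single[OF assms(1,2)] by blast
next
  case False
  then have "{C} = {B}" using assms(2,3) unfolding SF_q_def by simp
  then show ?thesis by blast
qed

lemma Fn_map_FS:
  assumes "f ` topspace X \<subseteq> topspace X" "A \<in> Fn_set n X"
  shows "Fn_map f A \<in> Fn_set n X"
proof -
  have A: "A \<subseteq> topspace X" "A \<noteq> {}" "finite A" "card A \<le> n" using assms(2) unfolding Fn_set_def by blast+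
  have "card (f ` A) \<le> n" using card_image_le[OF A(3), of f] A(4) by linarith
  moreover have "f ` A \<subseteq> topspace X" using A(1) assms(1) by blast
  ultimately show ?thesis using A(2,3) unfolding Fn_set_def Fn_map_def by blast
qed

lemma semiconj:
  assumes "x \<in> topspace X" "f ` topspace X \<subseteq> topspace X" "A \<in> Fn_set n X"
  shows "SFn_map n X f (SF_q n X A) = SF_q n X (Fn_map f A)"
proof (cases "A \<in> F1_set X")
  case True
  then obtain y where y: "A = {y}" "y \<in> topspace X" by (auto simp: F1_set_def)
  have "f y \<in> topspace X" using y assms(2) by blast
  then have "Fn_map f A \<in> F1_set X" using y unfolding Fn_map_def F1_set_def by auto
  then show ?thesis using True unfolding SFn_map_def SF_q_def SF_base_def by simp
next
  case False
  have ne: "SF_q n X A \<noteq> SF_base n X"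
    using F1_ne_single[OF assms(1) False] False by (simp add: SF_q_def SF_base_def)
  have "(THE B. B \<in> topspace (Fn n X) \<and> SF_q n X B = SF_q n X A) = A"
  proof (rule the_equality)
    show "A \<in> topspace (Fn n X) \<and> SF_q n X A = SF_q n X A" using assms(3) unfolding topspace_Fn by simp
  next
    fix B assume "B \<in> topspace (Fn n X) \<and> SF_q n X B = SF_q n X A"
    then show "B = A" using SF_q_inj[OF assms(1) False] by blast
  qed
  then show ?thesis using ne unfolding SFn_map_def by simp
qed

lemma semiconj_pow:
  assumes "x \<in> topspace X" "f ` topspace X \<subseteq> topspace X" "A \<in> Fn_set n X"
  shows "(SFn_map n X f ^^ j) (SF_q n X A) = SF_q n X ((Fn_map f ^^ j) A) \<and>
         (Fn_map f ^^ j) A \<in> Fn_set n X"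
proof (induct j)
  case 0 then show ?case using assms by simp
next
  case (Suc j)
  then have h1: "(SFn_map n X f ^^ j) (SF_q n X A) = SF_q n X ((Fn_map f ^^ j) A)"
    and h2: "(Fn_map f ^^ j) A \<in> Fn_set n X" by blast+
  have "(SFn_map n X f ^^ Suc j) (SF_q n X A) = SFn_map n X f ((SFn_map n X f ^^ j) (SF_q n X A))"
    by simp
  also have "\<dots> = SFn_map n X f (SF_q n X ((Fn_map f ^^ j) A))" by (simp only: h1)
  also have "\<dots> = SF_q n X (Fn_map f ((Fn_map f ^^ j) A))" by (rule semiconj[OF assms(1,2) h2])
  also have "\<dots> = SF_q n X ((Fn_map f ^^ Suc j) A)" by simp
  finally have e: "(SFn_map n X f ^^ Suc j) (SF_q n X A) = SF_q n X ((Fn_map f ^^ Suc j) A)" .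
  moreover have "(Fn_map f ^^ Suc j) A \<in> Fn_set n X" using Fn_map_FS[OF assms(2) h2] by (simp only: funpow.simps comp_def)
  ultimately show ?case by (rule conjI)
qed

lemma Fn_map_pow: "(Fn_map f ^^ j) A = (f ^^ j) ` A"
  by (induct j) (auto simp: Fn_map_def image_comp)

lemma imp21:
  assumes "n \<ge> 2" "boxtrans (Fn n X) (Fn_map f) m"
  shows "boxtrans X f m"
  unfolding boxtrans_def
proof (intro allI impI)
  fix U V :: "nat \<Rightarrow> 'a set"
  assume H: "\<forall>i<m. openin X (U i) \<and> U i \<noteq> {} \<and> openin X (V i) \<and> V i \<noteq> {}"
  define U' where "U' = (\<lambda>i. {A \<in> Fn_set n X. A \<subseteq> U i})"
  define V' where "V' = (\<lambda>i. {A \<in> Fn_set n X. A \<subseteq> V i})"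
  have ne: "{A \<in> Fn_set n X. A \<subseteq> W} \<noteq> {}" if Wo: "openin X W" and Wn: "W \<noteq> {}" for W
  proof -
    obtain x where x: "x \<in> W" using Wn by blast
    have "x \<in> topspace X" using openin_subset[OF Wo] x by blast
    then have "{x} \<in> Fn_set n X" using assms(1) unfolding Fn_set_def by simp
    then show ?thesis using x by blast
  qed
  have "\<forall>i<m. openin (Fn n X) (U' i) \<and> U' i \<noteq> {} \<and> openin (Fn n X) (V' i) \<and> V' i \<noteq> {}"
  proof (intro allI impI)
    fix i assume "i < m"
    then have h: "openin X (U i)" "U i \<noteq> {}" "openin X (V i)" "V i \<noteq> {}" using H by simp_all
    show "openin (Fn n X) (U' i) \<and> U' i \<noteq> {} \<and> openin (Fn n X) (V' i) \<and> V' i \<noteq> {}"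
      unfolding U'_def V'_def using open_sub[OF h(1)] open_sub[OF h(3)] ne[OF h(1,2)] ne[OF h(3,4)]
      by (intro conjI)
  qed
  then obtain k where k: "k \<ge> 1" "\<forall>i<m. \<exists>A\<in>U' i. (Fn_map f ^^ (Suc i * k)) A \<in> V' i"
    using assms(2)[unfolded boxtrans_def, rule_format, of U' V'] by blast
  have "\<forall>i<m. \<exists>x\<in>U i. (f ^^ (Suc i * k)) x \<in> V i"
  proof (intro allI impI)
    fix i assume i: "i < m"
    then obtain A where A: "A \<in> U' i" "(Fn_map f ^^ (Suc i * k)) A \<in> V' i" using k(2) by blast
    then obtain a where a: "a \<in> A" unfolding U'_def Fn_set_def by blast
    have "(f ^^ (Suc i * k)) ` A \<subseteq> V i" using A(2) unfolding V'_def Fn_map_pow by blast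
    then show "\<exists>x\<in>U i. (f ^^ (Suc i * k)) x \<in> V i" using a A(1) unfolding U'_def by blast
  qed
  then show "\<exists>k\<ge>1. \<forall>i<m. \<exists>x\<in>U i. (f ^^ (Suc i * k)) x \<in> V i" using k(1) by blast
qed

lemma imp23:
  assumes "x0 \<in> topspace X" "f ` topspace X \<subseteq> topspace X" "boxtrans (Fn n X) (Fn_map f) m"
  shows "boxtrans (SFn n X) (SFn_map n X f) m"
  unfolding boxtrans_def
proof (intro allI impI)
  fix U V :: "nat \<Rightarrow> 'a set set set"
  assume H: "\<forall>i<m. openin (SFn n X) (U i) \<and> U i \<noteq> {} \<and> openin (SFn n X) (V i) \<and> V i \<noteq> {}"
  define U' where "U' = (\<lambda>i. {A \<in> Fn_set n X. SF_q n X A \<in> U i})"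
  define V' where "V' = (\<lambda>i. {A \<in> Fn_set n X. SF_q n X A \<in> V i})"
  have P: "openin (Fn n X) {A \<in> Fn_set n X. SF_q n X A \<in> W} \<and> {A \<in> Fn_set n X. SF_q n X A \<in> W} \<noteq> {}"
    if Wo: "openin (SFn n X) W" and Wn: "W \<noteq> {}" for W
  proof -
    have W: "W \<subseteq> SF_q n X ` Fn_set n X" "openin (Fn n X) {A \<in> Fn_set n X. SF_q n X A \<in> W}"
      using Wo unfolding SFn_def openin_quotient_topology topspace_Fn by blast+
    obtain c where "c \<in> W" using Wn by blast
    then obtain A where "A \<in> Fn_set n X" "SF_q n X A \<in> W" using W(1) by blast
    then show ?thesis using W(2) by blast
  qed
  have "\<forall>i<m. openin (Fn n X) (U' i) \<and> U' i \<noteq> {} \<and> openin (Fn n X) (V' i) \<and> V' i \<noteq> {}"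
  proof (intro allI impI)
    fix i assume "i < m"
    then have "openin (SFn n X) (U i)" "U i \<noteq> {}" "openin (SFn n X) (V i)" "V i \<noteq> {}" using H by simp_all
    then show "openin (Fn n X) (U' i) \<and> U' i \<noteq> {} \<and> openin (Fn n X) (V' i) \<and> V' i \<noteq> {}"
      unfolding U'_def V'_def using P by simp
  qed
  then obtain k where k: "k \<ge> 1" "\<forall>i<m. \<exists>A\<in>U' i. (Fn_map f ^^ (Suc i * k)) A \<in> V' i"
    using assms(3)[unfolded boxtrans_def, rule_format, of U' V'] by blast
  have "\<forall>i<m. \<exists>c\<in>U i. (SFn_map n X f ^^ (Suc i * k)) c \<in> V i"
  proof (intro allI impI)
    fix i assume i: "i < m"
    then obtain A where A: "A \<in> U' i" "(Fn_map f ^^ (Suc i * k)) A \<in> V' i" using k(2) by blast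
    have AF: "A \<in> Fn_set n X" using A(1) unfolding U'_def by blast
    have "(SFn_map n X f ^^ (Suc i * k)) (SF_q n X A) = SF_q n X ((Fn_map f ^^ (Suc i * k)) A)"
      using semiconj_pow[OF assms(1,2) AF] by blast
    then have "(SFn_map n X f ^^ (Suc i * k)) (SF_q n X A) \<in> V i" using A(2) unfolding V'_def by simp
    moreover have "SF_q n X A \<in> U i" using A(1) unfolding U'_def by blast
    ultimately show "\<exists>c\<in>U i. (SFn_map n X f ^^ (Suc i * k)) c \<in> V i" by blast
  qed
  then show "\<exists>k\<ge>1. \<forall>i<m. \<exists>c\<in>U i. (SFn_map n X f ^^ (Suc i * k)) c \<in> V i" using k(1) by blast
qed

lemma imp32:
  assumes "compactum X" "n \<ge> 2" "f ` topspace X \<subseteq> topspace X"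
    "boxtrans (SFn n X) (SFn_map n X f) m"
  shows "boxtrans (Fn n X) (Fn_map f) m"
  unfolding boxtrans_def
proof (intro allI impI)
  obtain x0 where x0: "x0 \<in> topspace X" using assms(1) unfolding compactum_def by blast
  have haus: "Hausdorff_space X" using assms(1) unfolding compactum_def by blast
  fix U V :: "nat \<Rightarrow> 'a set set"
  assume H: "\<forall>i<m. openin (Fn n X) (U i) \<and> U i \<noteq> {} \<and> openin (Fn n X) (V i) \<and> V i \<noteq> {}"
  define U' where "U' = (\<lambda>i. SF_q n X ` (U i - F1_set X))"
  define V' where "V' = (\<lambda>i. SF_q n X ` (V i - F1_set X))"
  have P: "openin (SFn n X) (SF_q n X ` (W - F1_set X)) \<and> SF_q n X ` (W - F1_set X) \<noteq> {}"
    if Wo: "openin (Fn n X) W" and Wn: "W \<noteq> {}" for W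
  proof -
    have WF: "W \<subseteq> Fn_set n X" using openin_subset[OF Wo] unfolding topspace_Fn .
    have e: "{A \<in> Fn_set n X. SF_q n X A \<in> SF_q n X ` (W - F1_set X)} = W \<inter> (Fn_set n X - F1_set X)"
    proof
      show "{A \<in> Fn_set n X. SF_q n X A \<in> SF_q n X ` (W - F1_set X)} \<subseteq> W \<inter> (Fn_set n X - F1_set X)"
      proof
        fix A assume "A \<in> {A \<in> Fn_set n X. SF_q n X A \<in> SF_q n X ` (W - F1_set X)}"
        then obtain B where B: "A \<in> Fn_set n X" "B \<in> W" "B \<notin> F1_set X" "SF_q n X A = SF_q n X B" by blast
        then have "A = B" using SF_q_inj[OF x0] by blast
        then show "A \<in> W \<inter> (Fn_set n X - F1_set X)" using B by blast
      qed
    next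
      show "W \<inter> (Fn_set n X - F1_set X) \<subseteq> {A \<in> Fn_set n X. SF_q n X A \<in> SF_q n X ` (W - F1_set X)}"
        by blast
    qed
    have "openin (Fn n X) (W \<inter> (Fn_set n X - F1_set X))"
      using Wo F1_closed[OF haus] by (rule openin_Int)
    moreover have "SF_q n X ` (W - F1_set X) \<subseteq> SF_q n X ` topspace (Fn n X)"
      using WF unfolding topspace_Fn by blast
    ultimately have "openin (SFn n X) (SF_q n X ` (W - F1_set X))"
      unfolding SFn_def openin_quotient_topology topspace_Fn e by blast
    moreover have "W - F1_set X \<noteq> {}" using dense_nonF1[OF assms(1,2) Wo Wn] by blast
    ultimately show ?thesis by blast
  qed
  have "\<forall>i<m. openin (SFn n X) (U' i) \<and> U' i \<noteq> {} \<and> openin (SFn n X) (V' i) \<and> V' i \<noteq> {}"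
  proof (intro allI impI)
    fix i assume "i < m"
    then have "openin (Fn n X) (U i)" "U i \<noteq> {}" "openin (Fn n X) (V i)" "V i \<noteq> {}" using H by simp_all
    then show "openin (SFn n X) (U' i) \<and> U' i \<noteq> {} \<and> openin (SFn n X) (V' i) \<and> V' i \<noteq> {}"
      unfolding U'_def V'_def using P by simp
  qed
  then obtain k where k: "k \<ge> 1" "\<forall>i<m. \<exists>c\<in>U' i. (SFn_map n X f ^^ (Suc i * k)) c \<in> V' i"
    using assms(4)[unfolded boxtrans_def, rule_format, of U' V'] by blast
  have "\<forall>i<m. \<exists>A\<in>U i. (Fn_map f ^^ (Suc i * k)) A \<in> V i"
  proof (intro allI impI)
    fix i assume i: "i < m"
    then obtain c where c: "c \<in> U' i" "(SFn_map n X f ^^ (Suc i * k)) c \<in> V' i" using k(2) by blast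
    then obtain A where A: "A \<in> U i" "A \<notin> F1_set X" "c = SF_q n X A" unfolding U'_def by blast
    have "openin (Fn n X) (U i)" using H i by simp
    then have "U i \<subseteq> Fn_set n X" using openin_subset[of "Fn n X" "U i"] unfolding topspace_Fn by blast
    then have AF: "A \<in> Fn_set n X" using A(1) by blast
    obtain B where B: "B \<in> V i" "B \<notin> F1_set X"
      "(SFn_map n X f ^^ (Suc i * k)) c = SF_q n X B" using c(2) unfolding V'_def by blast
    have "(SFn_map n X f ^^ (Suc i * k)) (SF_q n X A) = SF_q n X ((Fn_map f ^^ (Suc i * k)) A)"
      using semiconj_pow[OF x0 assms(3) AF] by blast
    then have "SF_q n X ((Fn_map f ^^ (Suc i * k)) A) = SF_q n X B" using B(3) unfolding A(3) by (rule trans[OF sym])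
    then have "(Fn_map f ^^ (Suc i * k)) A = B" using SF_q_inj[OF x0 B(2)] by blast
    then show "\<exists>A\<in>U i. (Fn_map f ^^ (Suc i * k)) A \<in> V i" using A(1) B(1) by blast
  qed
  then show "\<exists>k\<ge>1. \<forall>i<m. \<exists>A\<in>U i. (Fn_map f ^^ (Suc i * k)) A \<in> V i" using k(1) by blast
qed

theorem theorem9:
  fixes X :: "'a topology" and n :: nat and f :: "'a \<Rightarrow> 'a"
  assumes "compactum X" and "n \<ge> 2" and "f ` topspace X \<subseteq> topspace X"
  shows "(multi_transitive_on (Fn n X) (Fn_map f) \<longleftrightarrow>
            multi_transitive_on (SFn n X) (SFn_map n X f)) \<and>
         (multi_transitive_on (Fn n X) (Fn_map f) \<longrightarrow> multi_transitive_on X f)"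
proof -
  obtain x0 where x0: "x0 \<in> topspace X" using assms(1) unfolding compactum_def by blast
  show ?thesis
    unfolding multi_box
    using imp21[OF assms(2)] imp23[OF x0 assms(3)] imp32[OF assms(1,2,3)] by blast
qed

end
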